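(* Let $X$ be a Banach space, $\alpha\in\mathbb{R}$ with $\alpha\ne0$, $0<\mu\le1$, $\beta\ge0$, and let $A=\rho I$ for some $\rho\in\mathbb{R}$. Assume that $\alpha>0$, or that $\alpha<0$ and $\alpha+\beta^\mu\ge|\alpha|$. Then the strongly continuous exponentially bounded $(\alpha,\beta,\mu)$-resolvent family associated with $$u'(t)=\rho u(t)+\frac{\rho\alpha}{\Gamma(\mu)}\int_0^te^{-\beta(t-s)}(t-s)^{\mu-1}u(s)\,ds,\ t>0,\qquad u(0)=u_0,$$ is given by $$S_{\alpha,\beta}^\mu(t)=e^{-\beta t}\sum_{k=0}^\infty(\rho+\beta)^kt^kE^{(k+1)}_{\mu+1,k+1}(\alpha\rho t^{\mu+1}),\quad t\ge0,$$ provided that the series converges, where $E^{(k+1)}_{\mu+1,k+1}(z)=\sum_{n=0}^\infty\frac{(k+n)!\,z^n}{n!\,k!\,\Gamma(n\mu+k+n+1)}$, $z\in\mathbb{C}$.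
   Context: Kernel: $\kappa(t)=\alpha e^{-\beta t}\frac{t^{\mu-1}}{\Gamma(\mu)}$, $t>0$, $(1\ast\kappa)(t)=\int_0^t\kappa(s)ds$. The $(\alpha,\beta,\mu)$-resolvent family generated by $A$ is a strongly continuous family $(S_{\alpha,\beta}^\mu(t))_{t\ge0}$ of bounded operators with $S_{\alpha,\beta}^\mu(0)=I$, commuting with $A$ on $D(A)$, and satisfying $S_{\alpha,\beta}^\mu(t)x=x+\int_0^t(1+1\ast\kappa)(t-s)AS_{\alpha,\beta}^\mu(s)x\,ds$ for $x\in D(A)$, $t\ge0$; the solution of the equation $u'(t)=Au(t)+\int_0^t\kappa(t-s)Au(s)ds$, $u(0)=u_0$, is $u(t)=S_{\alpha,\beta}^\mu(t)u_0$. Exponentially bounded means $\|S_{\alpha,\beta}^\mu(t)\|\le Me^{\widetilde\omega t}$ for some $M>0$, $\widetilde\omega\in\mathbb{R}$. *)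

theory Defs
  imports "HOL-Analysis.Analysis"
begin

definition kernel :: "real \<Rightarrow> real \<Rightarrow> real \<Rightarrow> real \<Rightarrow> real" where
  "kernel \<alpha> \<beta> \<mu> t = \<alpha> * exp (- \<beta> * t) * t powr (\<mu> - 1) / Gamma \<mu>"

definition kernel_int :: "real \<Rightarrow> real \<Rightarrow> real \<Rightarrow> real \<Rightarrow> real" where
  "kernel_int \<alpha> \<beta> \<mu> t = integral {0..t} (kernel \<alpha> \<beta> \<mu>)"

definition resolvent_family ::
  "real \<Rightarrow> real \<Rightarrow> real \<Rightarrow> 'a::banach set \<Rightarrow> ('a \<Rightarrow> 'a) \<Rightarrow> (real \<Rightarrow> ('a \<Rightarrow>\<^sub>L 'a)) \<Rightarrow> bool" where
  "resolvent_family \<alpha> \<beta> \<mu> D A S \<longleftrightarrow>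
     (\<forall>x. continuous_on {0..} (\<lambda>t. S t x)) \<and>
     S 0 = id_blinfun \<and>
     (\<forall>t\<ge>0. \<forall>x\<in>D. S t x \<in> D \<and> A (S t x) = S t (A x)) \<and>
     (\<forall>t\<ge>0. \<forall>x\<in>D.
        ((\<lambda>s. (1 + kernel_int \<alpha> \<beta> \<mu> (t - s)) *\<^sub>R A (S s x)) has_integral (S t x - x)) {0..t})"

definition exp_bounded :: "(real \<Rightarrow> ('a::real_normed_vector \<Rightarrow>\<^sub>L 'a)) \<Rightarrow> bool" where
  "exp_bounded S \<longleftrightarrow> (\<exists>M>0. \<exists>\<omega>. \<forall>t\<ge>0. norm (S t) \<le> M * exp (\<omega> * t))"

text \<open>Three-parameter (Prabhakar) Mittag-Leffler function
  E^gamma_{a,b}(z) = sum_n (gamma)_n z^n / (n! Gamma(a n + b)); for gamma = k+1,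
  (k+1)_n = (k+n)!/k!.\<close>
definition prabhakar_ML :: "real \<Rightarrow> real \<Rightarrow> real \<Rightarrow> real \<Rightarrow> real" where
  "prabhakar_ML \<gamma> a b z = (\<Sum>n. pochhammer \<gamma> n / (fact n * Gamma (a * real n + b)) * z ^ n)"

end

theory Submission
  imports Defs
begin


lemma powr_le_Gamma_exp:
  fixes x p :: real assumes x: "x \<ge> 0" and p: "p \<ge> 0"
  shows "x powr p \<le> exp 2 * Gamma (p + 1) * exp x"
proof -
  have G: "((\<lambda>t. t powr p / exp t) has_integral Gamma (p+1)) {0..}"
    using Gamma_integral_real[of "p+1"] p by simp
  have sub: "integral {x+1..x+2} (\<lambda>t. t powr p / exp t) \<le> Gamma (p+1)"
  proof -
    have "integral {x+1..x+2} (\<lambda>t. t powr p / exp t) \<le> integral {0..} (\<lambda>t. t powr p / exp t)"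
      by (rule integral_subset_le) (use x G in \<open>auto intro!: integrable_continuous_interval continuous_intros\<close>)
    then show ?thesis using G by (simp add: integral_unique)
  qed
  have low: "integral {x+1..x+2} (\<lambda>t. x powr p / exp (x+2)) \<le> integral {x+1..x+2} (\<lambda>t. t powr p / exp t)"
  proof (rule integral_le)
    show "(\<lambda>t. t powr p / exp t) integrable_on {x+1..x+2}"
      using x by (intro integrable_continuous_interval continuous_intros) auto
  next
    fix t assume t: "t \<in> {x+1..x+2}"
    have "x powr p \<le> t powr p" using t x p by (intro powr_mono2) auto
    moreover have "exp t \<le> exp (x+2)" using t by simp
    ultimately show "x powr p / exp (x+2) \<le> t powr p / exp t"
      by (intro frac_le) auto
  qed (intro integrable_continuous_interval continuous_intros)
  have "x powr p / exp (x+2) \<le> Gamma (p+1)" using low sub by simp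
  then show ?thesis by (simp add: exp_add field_simps mult.commute)
qed



definition pw :: "real \<Rightarrow> real \<Rightarrow> real" where
  "pw p t = (if p = 0 then 1 else t powr p)"
definition ph :: "real \<Rightarrow> real \<Rightarrow> real" where
  "ph p t = pw p t / Gamma (p + 1)"

lemma pw_pos: "x > 0 \<Longrightarrow> pw p x = x powr p"
  by (simp add: pw_def)

lemma pw_nonneg: "pw p x \<ge> 0" by (simp add: pw_def)

lemma ph_nonneg: "p \<ge> 0 \<Longrightarrow> ph p x \<ge> 0"
  by (simp add: ph_def pw_nonneg Gamma_real_pos)

lemma ph_0 [simp]: "ph 0 x = 1" by (simp add: ph_def pw_def)

lemma ph_at_0: "p > 0 \<Longrightarrow> ph p 0 = 0" by (simp add: ph_def pw_def)

lemma continuous_on_pw: "p \<ge> 0 \<Longrightarrow> continuous_on {0..} (pw p)"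
proof (cases "p = 0")
  case True then show ?thesis by (simp add: pw_def[abs_def])
next
  case False
  assume "p \<ge> 0"
  with False have "p > 0" by simp
  then have "continuous_on {0..} (\<lambda>x::real. x powr p)"
    by (intro continuous_on_powr') (auto intro: continuous_intros)
  then show ?thesis using False by (simp add: pw_def[abs_def])
qed

lemma continuous_on_ph: assumes "p \<ge> 0" shows "continuous_on {0..} (ph p)"
proof -
  have G: "Gamma (p+1) > 0" using assms by (intro Gamma_real_pos) auto
  then have N: "Gamma (p+1) \<noteq> 0" by simp
  have "continuous_on {0..} (\<lambda>t. pw p t / Gamma (p + 1))"
    by (rule continuous_on_divide[OF continuous_on_pw[OF assms] continuous_on_const]) (use N in simp)
  then show ?thesis unfolding ph_def[abs_def] .
qed

lemma continuous_on_ph_comp: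
  assumes "p \<ge> 0" "continuous_on S f" "\<And>x. x \<in> S \<Longrightarrow> f x \<ge> 0"
  shows "continuous_on S (\<lambda>x. ph p (f x))"
  using continuous_on_compose2[OF continuous_on_ph[OF assms(1)] assms(2)] assms(3) by auto

lemma ph_bound:
  assumes t: "t \<ge> 0" and p: "p \<ge> 0" and l: "l > 0"
  shows "ph p t \<le> exp 2 * exp (l * t) / l powr p"
proof -
  have "(l*t) powr p \<le> exp 2 * Gamma (p + 1) * exp (l*t)"
    using powr_le_Gamma_exp[of "l*t" p] t p l by simp
  moreover have "(l*t) powr p = l powr p * t powr p" using t l by (simp add: powr_mult)
  ultimately have A: "t powr p \<le> exp 2 * Gamma (p + 1) * exp (l*t) / l powr p"
    using l by (simp add: field_simps)
  have G: "Gamma (p+1) > 0" using p by (intro Gamma_real_pos) simp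
  show ?thesis
  proof (cases "p = 0")
    case True
    have "1 \<le> exp (2 + l * t)" using t l by simp
    then have "1 \<le> exp 2 * exp (l * t)" by (simp add: exp_add)
    then show ?thesis using True l by (simp add: ph_def pw_def)
  next
    case False
    then have "ph p t = t powr p / Gamma (p+1)" by (simp add: ph_def pw_def)
    also have "\<dots> \<le> exp 2 * Gamma (p + 1) * exp (l*t) / l powr p / Gamma (p+1)"
      using A G by (intro divide_right_mono) auto
    also have "\<dots> = exp 2 * exp (l * t) / l powr p" using G by simp
    finally show ?thesis .
  qed
qed

lemma image_times_Icc01: "t > 0 \<Longrightarrow> (\<lambda>x. x / (1 / t)) ` {0..1} = {0..(t::real)}"
proof safe
  fix y assume t: "t > 0" and y: "y \<in> {0..t}"
  then have "y / t \<in> {0..1}" by (auto simp: field_simps)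
  moreover have "y = (y/t) / (1/t)" using t by simp
  ultimately show "y \<in> (\<lambda>x. x / (1 / t)) ` {0..1}" by blast
qed (auto simp: mult_le_cancel_right1)

lemma ph_conv:
  assumes a: "a \<ge> 0" and p: "p \<ge> 0" and t: "t \<ge> 0"
  shows "((\<lambda>s. ph a (t - s) * ph p s) has_integral ph (a + p + 1) t) {0..t}"
proof (cases "t = 0")
  case True
  then show ?thesis using a p has_integral_refl(2)[of "\<lambda>s. ph a (t - s) * ph p s" 0]
    by (simp add: ph_at_0)
next
  case False
  with t have t: "t > 0" by simp
  define F where "F v = v powr p * (1 - v) powr a" for v :: real
  have B: "(F has_integral Beta (p+1) (a+1)) {0..1}"
    using has_integral_Beta_real[of "p+1" "a+1"] a p by (simp add: F_def[abs_def])
  have "(F has_integral \<bar>1/t\<bar> *\<^sub>R (t * Beta (p+1) (a+1))) {0..1}"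
    using B t by simp
  then have "((\<lambda>x. F ((1/t) * x)) has_integral (t * Beta (p+1) (a+1))) ((\<lambda>x. x / (1/t)) ` {0..1})"
    using has_integral_stretch_real_iff[of "1/t" F "t * Beta (p+1) (a+1)" 0 1] t by simp
  then have S: "((\<lambda>x. F (x / t)) has_integral (t * Beta (p+1) (a+1))) {0..t}"
    using image_times_Icc01[OF t] by simp
  define C where "C = t powr (a + p) / (Gamma (a+1) * Gamma (p+1))"
  have S2: "((\<lambda>x. C * F (x / t)) has_integral C * (t * Beta (p+1) (a+1))) {0..t}"
    by (intro has_integral_mult_right S)
  have Ga: "Gamma (a+1) > 0" "Gamma (p+1) > 0" "Gamma (a + p + 2) > 0"
    using a p by (auto intro!: Gamma_real_pos)
  have val: "C * (t * Beta (p+1) (a+1)) = ph (a + p + 1) t"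
  proof -
    have "Beta (p+1) (a+1) = Gamma (p+1) * Gamma (a+1) / Gamma (a + p + 2)"
      by (simp add: Beta_def add_ac)
    moreover have "t powr (a + p) * t = t powr (a + p + 1)" using t by (simp add: powr_add)
    moreover have "pw (a + p + 1) t = t powr (a + p + 1)" using t by (simp add: pw_pos)
    ultimately show ?thesis using Ga unfolding C_def ph_def
      by (simp add: field_simps add_ac)
  qed
  show ?thesis
  proof (rule has_integral_spike_finite[of "{0, t}"])
    show "((\<lambda>x. C * F (x / t)) has_integral ph (a + p + 1) t) {0..t}" using S2 val by simp
  next
    fix s assume s: "s \<in> {0..t} - {0, t}"
    then have s0: "s > 0" "s < t" by auto
    have e1: "(t - s) powr a = t powr a * (1 - s/t) powr a"
    proof -
      have "t - s = t * (1 - s/t)" using t by (simp add: field_simps)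
      then show ?thesis using t s0 by (simp add: powr_mult)
    qed
    have e2: "s powr p = t powr p * (s/t) powr p"
    proof -
      have "s = t * (s/t)" using t by simp
      then show ?thesis using t s0 by (metis divide_nonneg_nonneg less_eq_real_def powr_mult)
    qed
    have "ph a (t - s) * ph p s = (t - s) powr a * s powr p / (Gamma (a+1) * Gamma (p+1))"
      using s0 by (simp add: ph_def pw_pos)
    also have "\<dots> = C * F (s / t)"
      unfolding C_def F_def e1 e2 by (simp add: powr_add field_simps)
    finally show "ph a (t - s) * ph p s = C * F (s / t)" .
  qed simp
qed



lemma series_has_integral:
  fixes u :: "nat \<Rightarrow> real \<Rightarrow> real"
  assumes cont: "\<And>n. continuous_on {a..b} (u n)"
    and bound: "\<And>n x. x \<in> {a..b} \<Longrightarrow> \<bar>u n x\<bar> \<le> M n" and M: "summable M"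
  shows "((\<lambda>x. \<Sum>n. u n x) has_integral (\<Sum>n. integral {a..b} (u n))) {a..b}"
    and "continuous_on {a..b} (\<lambda>x. \<Sum>n. u n x)"
    and "summable (\<lambda>n. integral {a..b} (u n))"
proof -
  have U: "uniform_limit {a..b} (\<lambda>n x. \<Sum>i<n. u i x) (\<lambda>x. \<Sum>i. u i x) sequentially"
    by (rule Weierstrass_m_test[OF _ M]) (use bound in auto)
  have C: "\<And>n. continuous_on {a..b} (\<lambda>x. \<Sum>i<n. u i x)"
    by (intro continuous_intros cont)
  show "continuous_on {a..b} (\<lambda>x. \<Sum>n. u n x)"
    by (rule uniform_limit_theorem[OF _ U]) (use C in auto)
  obtain I J where I: "\<And>n. ((\<lambda>x. \<Sum>i<n. u i x) has_integral I n) {a..b}"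
    and J: "((\<lambda>x. \<Sum>i. u i x) has_integral J) {a..b}" and lim: "(I \<longlongrightarrow> J) sequentially"
    using uniform_limit_integral[OF U C] by auto
  have In: "I n = (\<Sum>i<n. integral {a..b} (u i))" for n
  proof -
    have "((\<lambda>x. \<Sum>i<n. u i x) has_integral (\<Sum>i<n. integral {a..b} (u i))) {a..b}"
      by (intro has_integral_sum) (auto intro: integrable_integral integrable_continuous_interval cont)
    then show ?thesis using I[of n] by (rule has_integral_unique[symmetric])
  qed
  have S: "(\<lambda>n. integral {a..b} (u n)) sums J"
  proof -
    have "I = (\<lambda>n. \<Sum>i<n. integral {a..b} (u i))" by (rule ext) (rule In)
    then show ?thesis unfolding sums_def using lim by simp
  qed
  then show "summable (\<lambda>n. integral {a..b} (u n))" by (rule sums_summable)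
  show "((\<lambda>x. \<Sum>n. u n x) has_integral (\<Sum>n. integral {a..b} (u n))) {a..b}"
    using J S by (simp add: sums_iff)
qed

definition T :: "real \<Rightarrow> real \<Rightarrow> real \<Rightarrow> nat \<Rightarrow> nat \<Rightarrow> real \<Rightarrow> real" where
  "T c d e k n t = c^k * d^n * real ((k+n) choose n) * ph (real k + e * real n) t"

definition lam :: "real \<Rightarrow> real \<Rightarrow> real" where
  "lam c d = max 1 (max (4*\<bar>c\<bar>) (4*\<bar>d\<bar>))"

lemma lam_ge: "lam c d \<ge> 1" "lam c d \<ge> 4*\<bar>c\<bar>" "lam c d \<ge> 4*\<bar>d\<bar>" "lam c d > 0"
  by (auto simp: lam_def)

lemma q_le: "2*\<bar>c\<bar>/lam c d \<le> 1/2" "2*\<bar>d\<bar>/lam c d \<le> 1/2"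
  using lam_ge[where c=c and d=d] by (auto simp: field_simps)

lemma geom_half: assumes "0 \<le> q" "q \<le> 1/2" shows "summable (\<lambda>n. q^n::real)" "(\<Sum>n. q^n) \<le> 2"
proof -
  show "summable (\<lambda>n. q^n)" using assms by (intro summable_geometric) auto
  have "(\<Sum>n. q^n) = 1/(1-q)" using assms by (intro suminf_geometric) auto
  also have "\<dots> \<le> 2" using assms by (auto simp: field_simps)
  finally show "(\<Sum>n. q^n) \<le> 2" .
qed

lemma T_bound:
  assumes e: "e \<ge> 1" and t: "0 \<le> t" "t \<le> R"
  shows "\<bar>T c d e k n t\<bar> \<le> exp 2 * exp (lam c d * R) * (2*\<bar>c\<bar>/lam c d)^k * (2*\<bar>d\<bar>/lam c d)^n"
proof -
  define l where "l = lam c d"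
  have l: "l \<ge> 1" "l > 0" using lam_ge unfolding l_def by auto
  have p0: "real k + e * real n \<ge> 0" using e by simp
  have B: "real ((k+n) choose n) \<le> 2^k * 2^n"
  proof -
    have "(k+n) choose n \<le> 2^(k+n)" by (rule binomial_le_pow2)
    then have "real ((k+n) choose n) \<le> real (2^(k+n))" by (rule of_nat_mono)
    then show ?thesis by (simp add: power_add)
  qed
  have P: "ph (real k + e * real n) t \<le> exp 2 * exp (l * R) / (l^k * l^n)"
  proof -
    have "ph (real k + e * real n) t \<le> exp 2 * exp (l * t) / l powr (real k + e * real n)"
      using ph_bound[OF t(1) p0 l(2)] .
    also have "\<dots> \<le> exp 2 * exp (l * R) / (l^k * l^n)"
    proof (rule frac_le)
      show "exp 2 * exp (l * t) \<le> exp 2 * exp (l * R)" using t l by (simp add: mult_left_mono)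
      have "l powr (real k + e * real n) = l powr real k * l powr (e * real n)"
        using l by (simp add: powr_add)
      moreover have "l powr real k = l^k" using l by (simp add: powr_realpow)
      moreover have "l powr (e * real n) \<ge> l powr real n" using l e
        by (intro powr_mono) (auto intro: mult_right_mono[of 1 e "real n", simplified])
      moreover have "l powr real n = l^n" using l by (simp add: powr_realpow)
      ultimately show "l^k * l^n \<le> l powr (real k + e * real n)"
        using l by (simp add: mult_left_mono)
    qed (use l in auto)
    finally show ?thesis .
  qed
  have ph0: "ph (real k + e * real n) t \<ge> 0" using ph_nonneg[OF p0] .
  have "\<bar>T c d e k n t\<bar> = \<bar>c\<bar>^k * \<bar>d\<bar>^n * real ((k+n) choose n) * ph (real k + e * real n) t"
    unfolding T_def using ph0 by (simp add: abs_mult power_abs)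
  also have "\<dots> \<le> \<bar>c\<bar>^k * \<bar>d\<bar>^n * (2^k * 2^n) * (exp 2 * exp (l * R) / (l^k * l^n))"
    by (intro mult_mono B P mult_nonneg_nonneg ph0) auto
  also have "\<dots> = exp 2 * exp (l * R) * (2*\<bar>c\<bar>/l)^k * (2*\<bar>d\<bar>/l)^n"
    using l by (simp add: field_simps power_mult_distrib power_divide)
  finally show ?thesis unfolding l_def .
qed



definition Tin :: "real \<Rightarrow> real \<Rightarrow> real \<Rightarrow> nat \<Rightarrow> real \<Rightarrow> real" where
  "Tin c d e k t = (\<Sum>n. T c d e k n t)"
definition gg :: "real \<Rightarrow> real \<Rightarrow> real \<Rightarrow> real \<Rightarrow> real" where
  "gg c d e t = (\<Sum>k. Tin c d e k t)"

lemma qs_nonneg: "0 \<le> 2*\<bar>c\<bar>/lam c d" "0 \<le> 2*\<bar>d\<bar>/lam c d"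
  using lam_ge(4)[of c d] by auto

lemma T_summable:
  assumes e: "e \<ge> 1" and s: "s \<ge> 0"
  shows "summable (\<lambda>n. T c d e k n s)"
proof (rule summable_comparison_test'[where N=0])
  show "summable (\<lambda>n. exp 2 * exp (lam c d * s) * (2*\<bar>c\<bar>/lam c d)^k * (2*\<bar>d\<bar>/lam c d)^n)"
    using geom_half(1)[OF qs_nonneg(2) q_le(2)] by (intro summable_mult)
  show "norm (T c d e k n s) \<le> exp 2 * exp (lam c d * s) * (2*\<bar>c\<bar>/lam c d)^k * (2*\<bar>d\<bar>/lam c d)^n" for n
    using T_bound[OF e s order.refl] by simp
qed

lemma Tin_bound:
  assumes e: "e \<ge> 1" and s: "0 \<le> s" "s \<le> R"
  shows "\<bar>Tin c d e k s\<bar> \<le> 2 * exp 2 * exp (lam c d * R) * (2*\<bar>c\<bar>/lam c d)^k"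
proof -
  define C where "C = exp 2 * exp (lam c d * R) * (2*\<bar>c\<bar>/lam c d)^k"
  have C0: "C \<ge> 0" unfolding C_def using qs_nonneg by auto
  have sg: "summable (\<lambda>n. C * (2*\<bar>d\<bar>/lam c d)^n)"
    using geom_half(1)[OF qs_nonneg(2) q_le(2)] by (intro summable_mult)
  have "norm (Tin c d e k s) \<le> (\<Sum>n. C * (2*\<bar>d\<bar>/lam c d)^n)"
    unfolding Tin_def
    by (rule norm_suminf_le[OF _ sg]) (use T_bound[OF e s] in \<open>simp add: C_def\<close>)
  then have "\<bar>Tin c d e k s\<bar> \<le> (\<Sum>n. C * (2*\<bar>d\<bar>/lam c d)^n)" by simp
  also have "\<dots> = C * (\<Sum>n. (2*\<bar>d\<bar>/lam c d)^n)"
    using geom_half(1)[OF qs_nonneg(2) q_le(2)] by (rule suminf_mult)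
  also have "\<dots> \<le> C * 2"
    using geom_half(2)[OF qs_nonneg(2) q_le(2)] C0 by (intro mult_left_mono) auto
  finally show ?thesis unfolding C_def by simp
qed

lemma Tin_summable:
  assumes e: "e \<ge> 1" and s: "s \<ge> 0"
  shows "summable (\<lambda>k. Tin c d e k s)"
proof (rule summable_comparison_test'[where N=0])
  show "summable (\<lambda>k. 2 * exp 2 * exp (lam c d * s) * (2*\<bar>c\<bar>/lam c d)^k)"
    using geom_half(1)[OF qs_nonneg(1) q_le(1)] by (intro summable_mult)
  show "norm (Tin c d e k s) \<le> 2 * exp 2 * exp (lam c d * s) * (2*\<bar>c\<bar>/lam c d)^k" for k
    using Tin_bound[OF e s order.refl] by simp
qed

lemma gg_bound:
  assumes e: "e \<ge> 1" and s: "s \<ge> 0"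
  shows "\<bar>gg c d e s\<bar> \<le> 4 * exp 2 * exp (lam c d * s)"
proof -
  define C where "C = 2 * exp 2 * exp (lam c d * s)"
  have C0: "C \<ge> 0" unfolding C_def by auto
  have sg: "summable (\<lambda>k. C * (2*\<bar>c\<bar>/lam c d)^k)"
    using geom_half(1)[OF qs_nonneg(1) q_le(1)] by (intro summable_mult)
  have "norm (gg c d e s) \<le> (\<Sum>k. C * (2*\<bar>c\<bar>/lam c d)^k)"
    unfolding gg_def
    by (rule norm_suminf_le[OF _ sg]) (use Tin_bound[OF e s order.refl] in \<open>simp add: C_def\<close>)
  then have "\<bar>gg c d e s\<bar> \<le> (\<Sum>k. C * (2*\<bar>c\<bar>/lam c d)^k)" by simp
  also have "\<dots> = C * (\<Sum>k. (2*\<bar>c\<bar>/lam c d)^k)"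
    using geom_half(1)[OF qs_nonneg(1) q_le(1)] by (rule suminf_mult)
  also have "\<dots> \<le> C * 2"
    using geom_half(2)[OF qs_nonneg(1) q_le(1)] C0 by (intro mult_left_mono) auto
  finally show ?thesis unfolding C_def by simp
qed

lemma continuous_on_T:
  assumes "e \<ge> 0" shows "continuous_on {0..} (T c d e k n)"
  unfolding T_def[abs_def] using assms
  by (intro continuous_intros continuous_on_ph) auto



lemma conv_gg:
  assumes e: "e \<ge> 1" and a: "a \<ge> 0" and t: "t \<ge> 0"
  shows "((\<lambda>s. ph a (t - s) * gg c d e s) has_integral
           (\<Sum>k. \<Sum>n. c^k * d^n * real ((k+n) choose n) * ph (a + (real k + e * real n) + 1) t)) {0..t}"
    and "continuous_on {0..t} (\<lambda>s. ph a (t - s) * gg c d e s)"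
proof -
  define l where "l = lam c d"
  define qc where "qc = 2*\<bar>c\<bar>/l"
  define qd where "qd = 2*\<bar>d\<bar>/l"
  have qc: "0 \<le> qc" "qc \<le> 1/2" and qd: "0 \<le> qd" "qd \<le> 1/2"
    using qs_nonneg q_le unfolding qc_def qd_def l_def by auto
  define K0 where "K0 = exp 2 * exp t"
  define Bt where "Bt = exp 2 * exp (l * t)"
  have K0: "0 \<le> ph a (t - s)" "ph a (t - s) \<le> K0" if "s \<in> {0..t}" for s
  proof -
    show "0 \<le> ph a (t - s)" using ph_nonneg[OF a] .
    have "ph a (t - s) \<le> exp 2 * exp (1 * (t - s)) / 1 powr a"
      using ph_bound[of "t - s" a 1] that a by auto
    also have "\<dots> \<le> K0" unfolding K0_def using that by simp
    finally show "ph a (t - s) \<le> K0" .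
  qed
  have contk: "continuous_on {0..t} (\<lambda>s. ph a (t - s))"
    by (rule continuous_on_ph_comp[OF a]) (auto intro!: continuous_intros)
  have contT: "continuous_on {0..t} (T c d e k n)" for k n
    by (rule continuous_on_subset[OF continuous_on_T]) (use e in auto)
  have inner: "((\<lambda>s. ph a (t - s) * Tin c d e k s) has_integral
                  (\<Sum>n. c^k * d^n * real ((k+n) choose n) * ph (a + (real k + e * real n) + 1) t)) {0..t}
             \<and> continuous_on {0..t} (\<lambda>s. ph a (t - s) * Tin c d e k s)" for k
  proof -
    define u where "u n s = ph a (t - s) * T c d e k n s" for n s
    have cu: "continuous_on {0..t} (u n)" for n
      unfolding u_def by (intro continuous_intros contk contT)
    have bu: "\<bar>u n s\<bar> \<le> K0 * Bt * qc^k * qd^n" if "s \<in> {0..t}" for n s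
    proof -
      have "\<bar>u n s\<bar> = ph a (t - s) * \<bar>T c d e k n s\<bar>"
        unfolding u_def using K0(1)[OF that] by (simp add: abs_mult)
      also have "\<dots> \<le> K0 * (Bt * qc^k * qd^n)"
        using K0[OF that] T_bound[OF e, of s t c d k n] that
        unfolding Bt_def qc_def qd_def l_def
        by (intro mult_mono) auto
      finally show ?thesis by (simp add: mult_ac)
    qed
    have sM: "summable (\<lambda>n. K0 * Bt * qc^k * qd^n)"
      using geom_half(1)[OF qd] by (intro summable_mult)
    note R = series_has_integral[of 0 t u, OF cu bu sM]
    have iu: "integral {0..t} (u n) = c^k * d^n * real ((k+n) choose n) * ph (a + (real k + e * real n) + 1) t" for n
    proof -
      have p0: "real k + e * real n \<ge> 0" using e by simp
      have "((\<lambda>s. (c^k * d^n * real ((k+n) choose n)) * (ph a (t - s) * ph (real k + e * real n) s))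
              has_integral (c^k * d^n * real ((k+n) choose n)) * ph (a + (real k + e * real n) + 1) t) {0..t}"
        by (intro has_integral_mult_right ph_conv a p0 t)
      moreover have "(\<lambda>s. (c^k * d^n * real ((k+n) choose n)) * (ph a (t - s) * ph (real k + e * real n) s)) = u n"
        unfolding u_def T_def by (auto simp: mult_ac)
      ultimately show ?thesis by (simp add: integral_unique mult_ac)
    qed
    have su: "(\<Sum>n. u n s) = ph a (t - s) * Tin c d e k s" if "s \<in> {0..t}" for s
      unfolding u_def Tin_def using T_summable[OF e, of s] that by (simp add: suminf_mult)
    have "((\<lambda>s. ph a (t - s) * Tin c d e k s) has_integral (\<Sum>n. integral {0..t} (u n))) {0..t}"
      using R(1) by (rule has_integral_eq[rotated]) (use su in auto)
    moreover have "continuous_on {0..t} (\<lambda>s. ph a (t - s) * Tin c d e k s)"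
      using R(2) by (rule continuous_on_eq) (use su in auto)
    ultimately show ?thesis using iu by simp
  qed
  define v where "v k s = ph a (t - s) * Tin c d e k s" for k s
  have cv: "continuous_on {0..t} (v k)" for k using inner[of k] unfolding v_def by simp
  have bv: "\<bar>v k s\<bar> \<le> K0 * (2 * Bt * qc^k)" if "s \<in> {0..t}" for k s
  proof -
    have "\<bar>v k s\<bar> = ph a (t - s) * \<bar>Tin c d e k s\<bar>"
      unfolding v_def using K0(1)[OF that] by (simp add: abs_mult)
    also have "\<dots> \<le> K0 * (2 * Bt * qc^k)"
      using K0[OF that] Tin_bound[OF e, of s t c d k] that
      unfolding Bt_def qc_def l_def
      by (intro mult_mono) (auto simp: mult_ac)
    finally show ?thesis .
  qed
  have sM: "summable (\<lambda>k. K0 * (2 * Bt * qc^k))"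
    using geom_half(1)[OF qc] by (intro summable_mult)
  note R = series_has_integral[of 0 t v, OF cv bv sM]
  have sv: "(\<Sum>k. v k s) = ph a (t - s) * gg c d e s" if "s \<in> {0..t}" for s
    unfolding v_def gg_def using Tin_summable[OF e, of s] that by (simp add: suminf_mult)
  have iv: "integral {0..t} (v k) = (\<Sum>n. c^k * d^n * real ((k+n) choose n) * ph (a + (real k + e * real n) + 1) t)" for k
    using inner[of k] unfolding v_def by (simp add: integral_unique)
  show "((\<lambda>s. ph a (t - s) * gg c d e s) has_integral
           (\<Sum>k. \<Sum>n. c^k * d^n * real ((k+n) choose n) * ph (a + (real k + e * real n) + 1) t)) {0..t}"
    using R(1) iv by (intro has_integral_eq[OF _ R(1)[unfolded iv]]) (use sv in auto)
  show "continuous_on {0..t} (\<lambda>s. ph a (t - s) * gg c d e s)"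
    using R(2) by (rule continuous_on_eq) (use sv in auto)
qed



lemma X_bound:
  assumes e: "e \<ge> 1" and s: "s \<ge> 0" and t: "0 \<le> t" "t \<le> R"
  shows "\<bar>c^k * d^n * real ((k+n) choose n) * ph (s + (real k + e * real n)) t\<bar>
          \<le> exp 2 * exp (lam c d * R) * (2*\<bar>c\<bar>/lam c d)^k * (2*\<bar>d\<bar>/lam c d)^n"
proof -
  define l where "l = lam c d"
  have l: "l \<ge> 1" "l > 0" using lam_ge unfolding l_def by auto
  have p0: "s + (real k + e * real n) \<ge> 0" using e s by simp
  have B: "real ((k+n) choose n) \<le> 2^k * 2^n"
  proof -
    have "(k+n) choose n \<le> 2^(k+n)" by (rule binomial_le_pow2)
    then have "real ((k+n) choose n) \<le> real (2^(k+n))" by (rule of_nat_mono)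
    then show ?thesis by (simp add: power_add)
  qed
  have P: "ph (s + (real k + e * real n)) t \<le> exp 2 * exp (l * R) / (l^k * l^n)"
  proof -
    have "ph (s + (real k + e * real n)) t \<le> exp 2 * exp (l * t) / l powr (s + (real k + e * real n))"
      using ph_bound[OF t(1) p0 l(2)] .
    also have "\<dots> \<le> exp 2 * exp (l * R) / (l^k * l^n)"
    proof (rule frac_le)
      show "exp 2 * exp (l * t) \<le> exp 2 * exp (l * R)" using t l by (simp add: mult_left_mono)
      have "l powr (s + (real k + e * real n)) = l powr s * (l powr real k * l powr (e * real n))"
        using l by (simp add: powr_add)
      moreover have s1: "l powr s \<ge> 1" using l s by (simp add: ge_one_powr_ge_zero)
      moreover have "l powr real k = l^k" using l by (simp add: powr_realpow)
      moreover have en: "l powr (e * real n) \<ge> l powr real n" using l e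
        by (intro powr_mono) (auto intro: mult_right_mono[of 1 e "real n", simplified])
      moreover have "l powr real n = l^n" using l by (simp add: powr_realpow)
      ultimately have eq: "l powr (s + (real k + e * real n)) = l powr s * (l^k * l powr (e * real n))"
        and en': "l^n \<le> l powr (e * real n)" by auto
      have "l^k * l^n \<le> l^k * l powr (e * real n)" using en' l by (intro mult_left_mono) auto
      also have "\<dots> \<le> l powr s * (l^k * l powr (e * real n))"
        using mult_right_mono[OF s1, of "l^k * l powr (e * real n)"] l by simp
      finally show "l^k * l^n \<le> l powr (s + (real k + e * real n))" using eq by simp
    qed (use l in auto)
    finally show ?thesis .
  qed
  have ph0: "ph (s + (real k + e * real n)) t \<ge> 0" using ph_nonneg[OF p0] .
  have "\<bar>c^k * d^n * real ((k+n) choose n) * ph (s + (real k + e * real n)) t\<bar>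
      = \<bar>c\<bar>^k * \<bar>d\<bar>^n * real ((k+n) choose n) * ph (s + (real k + e * real n)) t"
    using ph0 by (simp add: abs_mult power_abs)
  also have "\<dots> \<le> \<bar>c\<bar>^k * \<bar>d\<bar>^n * (2^k * 2^n) * (exp 2 * exp (l * R) / (l^k * l^n))"
    by (intro mult_mono B P mult_nonneg_nonneg ph0) auto
  also have "\<dots> = exp 2 * exp (l * R) * (2*\<bar>c\<bar>/l)^k * (2*\<bar>d\<bar>/l)^n"
    using l by (simp add: field_simps power_mult_distrib power_divide)
  finally show ?thesis unfolding l_def .
qed

lemma dbl_summ:
  fixes X :: "nat \<Rightarrow> nat \<Rightarrow> real"
  assumes b: "\<And>k n. \<bar>X k n\<bar> \<le> C * q1^k * q2^n"
    and q1: "0 \<le> q1" "q1 \<le> 1/2" and q2: "0 \<le> q2" "q2 \<le> 1/2"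
  shows "summable (\<lambda>n. X k n)" "summable (\<lambda>k. \<Sum>n. X k n)"
proof -
  have g2: "summable (\<lambda>n. q2^n)" using geom_half(1)[OF q2] .
  have g1: "summable (\<lambda>k. q1^k)" using geom_half(1)[OF q1] .
  have s: "summable (\<lambda>n. C * q1^k * q2^n)" for k using g2 by (intro summable_mult)
  show "summable (\<lambda>n. X k n)"
    by (rule summable_comparison_test'[OF s[of k], where N=0]) (use b in simp)
  show "summable (\<lambda>k. \<Sum>n. X k n)"
  proof (rule summable_comparison_test'[where N=0])
    show "summable (\<lambda>k. (C * (\<Sum>n. q2^n)) * q1^k)" using g1 by (intro summable_mult)
    fix k
    have "norm (\<Sum>n. X k n) \<le> (\<Sum>n. C * q1^k * q2^n)"
      by (rule norm_suminf_le[OF _ s]) (use b in simp)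
    also have "\<dots> = (C * q1^k) * (\<Sum>n. q2^n)" using g2 by (rule suminf_mult)
    finally show "norm (\<Sum>n. X k n) \<le> (C * (\<Sum>n. q2^n)) * q1^k" by (simp add: mult_ac)
  qed
qed

lemma dbl_mult:
  fixes X :: "nat \<Rightarrow> nat \<Rightarrow> real"
  assumes b: "\<And>k n. \<bar>X k n\<bar> \<le> C * q1^k * q2^n"
    and q1: "0 \<le> q1" "q1 \<le> 1/2" and q2: "0 \<le> q2" "q2 \<le> 1/2"
  shows "a * (\<Sum>k. \<Sum>n. X k n) = (\<Sum>k. \<Sum>n. a * X k n)"
proof -
  note S = dbl_summ[OF b q1 q2]
  have "a * (\<Sum>k. \<Sum>n. X k n) = (\<Sum>k. a * (\<Sum>n. X k n))" using S(2) by (rule suminf_mult[symmetric])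
  also have "\<dots> = (\<Sum>k. \<Sum>n. a * X k n)" using S(1) by (simp add: suminf_mult)
  finally show ?thesis .
qed

lemma dbl_add:
  fixes X Y :: "nat \<Rightarrow> nat \<Rightarrow> real"
  assumes b: "\<And>k n. \<bar>X k n\<bar> \<le> C * q1^k * q2^n" and b': "\<And>k n. \<bar>Y k n\<bar> \<le> C' * q1^k * q2^n"
    and q1: "0 \<le> q1" "q1 \<le> 1/2" and q2: "0 \<le> q2" "q2 \<le> 1/2"
  shows "(\<Sum>k. \<Sum>n. X k n + Y k n) = (\<Sum>k. \<Sum>n. X k n) + (\<Sum>k. \<Sum>n. Y k n)"
proof -
  note S = dbl_summ[OF b q1 q2] and S' = dbl_summ[OF b' q1 q2]
  have "(\<Sum>k. \<Sum>n. X k n + Y k n) = (\<Sum>k. (\<Sum>n. X k n) + (\<Sum>n. Y k n))"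
    using S(1) S'(1) by (simp add: suminf_add)
  also have "\<dots> = (\<Sum>k. \<Sum>n. X k n) + (\<Sum>k. \<Sum>n. Y k n)"
    using S(2) S'(2) by (simp add: suminf_add)
  finally show ?thesis .
qed



lemma gg_eq:
  assumes mu: "\<mu> > 0" and e: "e = \<mu> + 1" and t: "t \<ge> 0"
  shows "gg c d e t = 1 + c * integral {0..t} (gg c d e)
                        + d * integral {0..t} (\<lambda>s. ph \<mu> (t - s) * gg c d e s)"
proof -
  have e1: "e \<ge> 1" using e mu by simp
  define C where "C = exp 2 * exp (lam c d * t)"
  define q1 where "q1 = 2*\<bar>c\<bar>/lam c d"
  define q2 where "q2 = 2*\<bar>d\<bar>/lam c d"
  have q1: "0 \<le> q1" "q1 \<le> 1/2" and q2: "0 \<le> q2" "q2 \<le> 1/2"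
    using qs_nonneg q_le unfolding q1_def q2_def by auto
  define B where "B k n = real ((k+n) choose n)" for k n
  define U where "U k n = c^k * d^n * ph (real k + e * real n) t" for k n
  define X where "X s k n = c^k * d^n * B k n * ph (s + (real k + e * real n)) t" for s k n
  have Xb: "\<bar>X s k n\<bar> \<le> C * q1^k * q2^n" if "s \<ge> 0" for s k n
    using X_bound[OF e1 that t order.refl, where c=c and d=d and k=k and n=n] unfolding X_def B_def C_def q1_def q2_def .
  have I0: "(gg c d e has_integral (\<Sum>k. \<Sum>n. X 1 k n)) {0..t}"
    using conv_gg(1)[OF e1 order.refl t, of c d] by (simp add: X_def B_def add_ac)
  have Imu: "((\<lambda>s. ph \<mu> (t - s) * gg c d e s) has_integral (\<Sum>k. \<Sum>n. X (\<mu>+1) k n)) {0..t}"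
    using conv_gg(1)[OF e1 _ t, of \<mu> c d] mu by (simp add: X_def B_def add_ac)
  have G0: "gg c d e t = (\<Sum>k. \<Sum>n. X 0 k n)"
    unfolding gg_def Tin_def T_def X_def B_def by simp
  define P where "P k n = (if k = 0 then 0 else B (k-1) n * U k n)" for k n
  define Q where "Q k n = (if n = 0 then 0 else B k (n-1) * U k n)" for k n
  define D :: "nat \<Rightarrow> nat \<Rightarrow> real" where "D k n = (if k = 0 \<and> n = 0 then 1 else 0)" for k n
  have X0U: "X 0 k n = B k n * U k n" for k n unfolding X_def U_def by simp
  have pascalS: "B (Suc k) (Suc n) = B k (Suc n) + B (Suc k) n" for k n
  proof -
    have "Suc k + Suc n = Suc (Suc k + n)" by simp
    then have "(Suc k + Suc n) choose Suc n = (Suc k + n choose n) + (Suc k + n choose Suc n)" by simp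
    moreover have "Suc k + n = k + Suc n" by simp
    ultimately have N: "(Suc k + Suc n) choose Suc n = (k + Suc n choose Suc n) + (Suc k + n choose n)" by simp
    show ?thesis unfolding B_def N by simp
  qed
  have pascal: "B k n = B (k-1) n + B k (n-1)" if "k > 0" "n > 0" for k n
    using pascalS[of "k-1" "n-1"] that by simp
  have split: "X 0 k n = P k n + Q k n + D k n" for k n
  proof (cases "k = 0")
    case True
    then show ?thesis unfolding X0U P_def Q_def D_def B_def U_def by (cases n) auto
  next
    case False
    show ?thesis
    proof (cases "n = 0")
      case True
      then show ?thesis using False unfolding X0U P_def Q_def D_def B_def by simp
    next
      case n: False
      then show ?thesis using False pascal[of k n] unfolding X0U P_def Q_def D_def
        by (simp add: algebra_simps)
    qed
  qed
  have Bnn: "B k n \<ge> 0" for k n unfolding B_def by simp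
  have Pb: "\<bar>P k n\<bar> \<le> C * q1^k * q2^n" for k n
  proof (cases "k = 0")
    case False
    have "B (k-1) n \<le> B k n"
    proof (cases "n = 0")
      case True then show ?thesis by (simp add: B_def)
    next
      case False then show ?thesis using pascal[of k n] \<open>k \<noteq> 0\<close> Bnn[of k "n-1"] by simp
    qed
    then have "\<bar>P k n\<bar> \<le> \<bar>X 0 k n\<bar>" using False unfolding P_def X0U
      by (simp add: abs_mult Bnn mult_right_mono)
    then show ?thesis using Xb[of 0 k n] by simp
  qed (simp add: P_def q1 q2 Xb[of 0 0 n] C_def)
  have Qb: "\<bar>Q k n\<bar> \<le> C * q1^k * q2^n" for k n
  proof (cases "n = 0")
    case False
    have "B k (n-1) \<le> B k n"
    proof (cases "k = 0")
      case True then show ?thesis by (simp add: B_def)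
    next
      case False then show ?thesis using pascal[of k n] \<open>n \<noteq> 0\<close> Bnn[of "k-1" n] by simp
    qed
    then have "\<bar>Q k n\<bar> \<le> \<bar>X 0 k n\<bar>" using False unfolding Q_def X0U
      by (simp add: abs_mult Bnn mult_right_mono)
    then show ?thesis using Xb[of 0 k n] by simp
  qed (simp add: Q_def q1 q2 C_def)
  have Db: "\<bar>D k n\<bar> \<le> 1 * q1^k * q2^n" for k n by (simp add: D_def q1 q2)
  have PQb: "\<bar>P k n + Q k n\<bar> \<le> (C + C) * q1^k * q2^n" for k n
    using Pb[of k n] Qb[of k n] by (simp add: algebra_simps)
  have "(\<Sum>k. \<Sum>n. X 0 k n) = (\<Sum>k. \<Sum>n. (P k n + Q k n) + D k n)" by (simp add: split)
  also have "\<dots> = (\<Sum>k. \<Sum>n. P k n + Q k n) + (\<Sum>k. \<Sum>n. D k n)"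
    by (rule dbl_add[OF PQb Db q1 q2])
  also have "(\<Sum>k. \<Sum>n. P k n + Q k n) = (\<Sum>k. \<Sum>n. P k n) + (\<Sum>k. \<Sum>n. Q k n)"
    by (rule dbl_add[OF Pb Qb q1 q2])
  also have "(\<Sum>k. \<Sum>n. D k n) = 1"
  proof -
    have "(\<Sum>n. D k n) = (if k = 0 then 1 else 0)" for k
      by (subst suminf_finite[of "{0}"]) (auto simp: D_def)
    then have "(\<Sum>k. \<Sum>n. D k n) = (\<Sum>k::nat. if k = 0 then 1 else (0::real))" by simp
    also have "\<dots> = 1" by (subst suminf_finite[of "{0}"]) auto
    finally show ?thesis .
  qed
  also have "(\<Sum>k. \<Sum>n. P k n) = c * (\<Sum>k. \<Sum>n. X 1 k n)"
  proof -
    have "c * (\<Sum>k. \<Sum>n. X 1 k n) = (\<Sum>k. \<Sum>n. c * X 1 k n)"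
      by (rule dbl_mult[OF Xb q1 q2]) simp
    also have "\<dots> = (\<Sum>k. \<Sum>n. P (Suc k) n)"
      unfolding X_def P_def U_def by (simp add: algebra_simps)
    also have "\<dots> = (\<Sum>k. \<Sum>n. P k n)"
      using suminf_split_head[OF dbl_summ(2)[OF Pb q1 q2]] by (simp add: P_def)
    finally show ?thesis by simp
  qed
  also have "(\<Sum>k. \<Sum>n. Q k n) = d * (\<Sum>k. \<Sum>n. X (\<mu>+1) k n)"
  proof -
    have "d * (\<Sum>k. \<Sum>n. X (\<mu>+1) k n) = (\<Sum>k. \<Sum>n. d * X (\<mu>+1) k n)"
      by (rule dbl_mult[OF Xb q1 q2]) (use mu in simp)
    also have "\<dots> = (\<Sum>k. \<Sum>n. Q k (Suc n))"
      unfolding X_def Q_def U_def e by (simp add: algebra_simps)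
    also have "\<dots> = (\<Sum>k. \<Sum>n. Q k n)"
    proof -
      have "(\<Sum>n. Q k (Suc n)) = (\<Sum>n. Q k n)" for k
        using suminf_split_head[OF dbl_summ(1)[OF Qb q1 q2, of k]] by (simp add: Q_def)
      then show ?thesis by simp
    qed
    finally show ?thesis by simp
  qed
  finally show ?thesis using G0 I0 Imu by (simp add: integral_unique)
qed



lemma ph_pos_eq: "p \<noteq> 0 \<Longrightarrow> ph p x = x powr p / Gamma (p + 1)"
  by (simp add: ph_def pw_def)

lemma kernel_int_eq:
  assumes mu: "\<mu> > 0" and r: "r \<ge> 0"
  shows "kernel_int \<alpha> \<beta> \<mu> r =
           \<alpha> * (exp (- \<beta> * r) * ph \<mu> r + \<beta> * integral {0..r} (\<lambda>u. exp (- \<beta> * u) * ph \<mu> u))"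
proof -
  define a where "a u = exp (- \<beta> * u) * ph \<mu> u" for u
  define F where "F u = \<alpha> * (a u + \<beta> * integral {0..u} a)" for u
  have ca: "continuous_on {0..} a"
    unfolding a_def using mu by (intro continuous_intros continuous_on_ph) auto
  have ca': "continuous_on {0..r} a" using ca by (rule continuous_on_subset) auto
  have ia: "a integrable_on {0..r}" using ca' by (rule integrable_continuous_interval)
  have cF: "continuous_on {0..r} F"
    unfolding F_def by (intro continuous_intros ca' indefinite_integral_continuous_1 ia)
  have G: "Gamma (\<mu> + 1) = \<mu> * Gamma \<mu>"
    using mu by (intro Gamma_plus1) (auto elim!: nonpos_Ints_cases)
  have Gpos: "Gamma \<mu> > 0" using mu by (rule Gamma_real_pos)
  have dF: "(F has_vector_derivative kernel \<alpha> \<beta> \<mu> x) (at x)" if x: "x \<in> {0<..<r}" for x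
  proof -
    have x0: "x > 0" using x by auto
    have dI: "((\<lambda>u. integral {0..u} a) has_vector_derivative a x) (at x)"
    proof -
      have "((\<lambda>u. integral {0..u} a) has_vector_derivative a x) (at x within {0..r})"
        using x by (intro integral_has_vector_derivative ca') auto
      moreover have "at x within {0..r} = at x"
        by (rule at_within_interior) (use x in \<open>simp add: interior_atLeastAtMost_real\<close>)
      ultimately show ?thesis by metis
    qed
    have dph: "((\<lambda>u. u powr \<mu> / Gamma (\<mu> + 1)) has_real_derivative (\<mu> * x powr (\<mu> - 1) / Gamma (\<mu> + 1))) (at x)"
      using has_real_derivative_powr[OF x0, of \<mu>] by (rule DERIV_cdivide)
    have pheq: "ph \<mu> = (\<lambda>u. u powr \<mu> / Gamma (\<mu> + 1))" using mu by (auto simp: ph_pos_eq)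
    have da: "(a has_real_derivative (- \<beta> * exp (- \<beta> * x) * ph \<mu> x
               + exp (- \<beta> * x) * (\<mu> * x powr (\<mu> - 1) / Gamma (\<mu> + 1)))) (at x)"
    proof -
      have dexp: "((\<lambda>u. exp (- \<beta> * u)) has_real_derivative (- \<beta> * exp (- \<beta> * x))) (at x)"
        by (auto intro!: derivative_eq_intros)
      have "((\<lambda>u. exp (- \<beta> * u) * (u powr \<mu> / Gamma (\<mu> + 1))) has_real_derivative
             exp (- \<beta> * x) * (\<mu> * x powr (\<mu> - 1) / Gamma (\<mu> + 1)) + (- \<beta> * exp (- \<beta> * x)) * (x powr \<mu> / Gamma (\<mu> + 1))) (at x)"
        by (rule DERIV_mult'[OF dexp dph])
      then show ?thesis unfolding a_def pheq by (simp add: algebra_simps)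
    qed
    have "(F has_real_derivative \<alpha> * ((- \<beta> * exp (- \<beta> * x) * ph \<mu> x
               + exp (- \<beta> * x) * (\<mu> * x powr (\<mu> - 1) / Gamma (\<mu> + 1))) + \<beta> * a x)) (at x)"
      unfolding F_def using dI
      by (auto intro!: derivative_eq_intros da simp: has_real_derivative_iff_has_vector_derivative[symmetric])
    moreover have "\<alpha> * ((- \<beta> * exp (- \<beta> * x) * ph \<mu> x
               + exp (- \<beta> * x) * (\<mu> * x powr (\<mu> - 1) / Gamma (\<mu> + 1))) + \<beta> * a x)
          = kernel \<alpha> \<beta> \<mu> x"
      unfolding kernel_def a_def G using mu Gpos by (simp add: field_simps)
    ultimately have "(F has_real_derivative kernel \<alpha> \<beta> \<mu> x) (at x)" by simp
    then show ?thesis by (simp only: has_real_derivative_iff_has_vector_derivative)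
  qed
  have "(kernel \<alpha> \<beta> \<mu> has_integral (F r - F 0)) {0..r}"
    by (rule fundamental_theorem_of_calculus_interior[OF r cF dF])
  moreover have "F 0 = 0" unfolding F_def a_def using mu by (simp add: ph_at_0)
  ultimately have "kernel_int \<alpha> \<beta> \<mu> r = F r" unfolding kernel_int_def by (simp add: integral_unique)
  then show ?thesis unfolding F_def a_def .
qed



lemma conv_assoc:
  fixes a h :: "real \<Rightarrow> real"
  assumes ca: "continuous_on {0..} a" and a0: "a 0 = 0" and ch: "continuous_on {0..} h" and t: "t \<ge> 0"
  shows "((\<lambda>x. integral {0..x} (\<lambda>s. a (x - s) * h s)) has_integral
            integral {0..t} (\<lambda>s. integral {0..t-s} a * h s)) {0..t}"
proof -
  define L where "L = t + 2"
  define ax where "ax r = a (max r 0)" for r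
  define Ax where "Ax r = integral {-L..r} ax" for r
  have cat: "continuous_on UNIV ax"
    unfolding ax_def by (rule continuous_on_compose2[OF ca]) (auto intro!: continuous_intros)
  have at0: "ax r = 0" if "r \<le> 0" for r using that a0 by (simp add: ax_def max_def)
  have atpos: "ax r = a r" if "r \<ge> 0" for r using that by (simp add: ax_def)
  have intat: "ax integrable_on {u..v}" for u v
    by (rule integrable_continuous_interval) (rule continuous_on_subset[OF cat], auto)
  have At0: "Ax r = 0" if "r \<le> 0" for r
  proof (cases "r < -L")
    case True then show ?thesis by (simp add: Ax_def)
  next
    case False
    have "Ax r = integral {-L..r} (\<lambda>_. 0::real)"
      unfolding Ax_def by (rule integral_cong) (use that at0 in auto)
    then show ?thesis by simp
  qed
  have Atpos: "Ax r = integral {0..r} a" if "r \<ge> 0" for r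
  proof -
    have "integral {-L..0} ax + integral {0..r} ax = integral {-L..r} ax"
      unfolding L_def by (rule Henstock_Kurzweil_Integration.integral_combine) (use that t intat in auto)
    moreover have "integral {-L..0} ax = 0" using At0[of 0] by (simp add: Ax_def)
    moreover have "integral {0..r} ax = integral {0..r} a" by (rule integral_cong) (simp add: atpos)
    ultimately show ?thesis by (simp add: Ax_def)
  qed
  have dAt: "(Ax has_real_derivative ax r) (at r)" if "r > -L" for r
  proof -
    have "(Ax has_vector_derivative ax r) (at r within {-L..r+1})"
      unfolding Ax_def using that
      by (intro integral_has_vector_derivative continuous_on_subset[OF cat]) auto
    moreover have "at r within {-L..r+1} = at r"
      by (rule at_within_interior) (use that in \<open>simp add: interior_atLeastAtMost_real\<close>)
    ultimately show ?thesis by (simp add: has_real_derivative_iff_has_vector_derivative)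
  qed
  define U where "U = {-1<..<t+1}"
  have Ucv: "convex U" unfolding U_def by (rule convex_real_interval)
  have inU: "x - s > -L" if "x \<in> U" "s \<in> {0..t}" for x s
    using that unfolding U_def L_def by auto
  have cAt: "continuous_on {-L<..} Ax"
    by (rule continuous_at_imp_continuous_on) (auto intro: DERIV_isCont dAt)
  define H where "H x = integral (cbox 0 t) (\<lambda>s. Ax (x - s) * h s)" for x
  define Phi where "Phi x = integral (cbox 0 t) (\<lambda>s. ax (x - s) * h s)" for x
  have chT: "continuous_on {0..t} h" by (rule continuous_on_subset[OF ch]) auto
  have dH: "(H has_real_derivative Phi x) (at x within U)" if x: "x \<in> U" for x
    unfolding H_def Phi_def
  proof (rule leibniz_rule_field_derivative[OF _ _ _ x Ucv])
    fix y s assume y: "y \<in> U" and s: "s \<in> cbox 0 t"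
    have "((\<lambda>y. Ax (y - s)) has_real_derivative ax (y - s) * 1) (at y within U)"
      by (rule DERIV_chain2[OF dAt]) (use inU[OF y] s in \<open>auto intro!: derivative_eq_intros\<close>)
    then show "((\<lambda>y. Ax (y - s) * h s) has_real_derivative ax (y - s) * h s) (at y within U)"
      by (auto intro!: derivative_eq_intros)
  next
    fix y assume y: "y \<in> U"
    have "continuous_on {0..t} (\<lambda>s. Ax (y - s) * h s)"
      by (intro continuous_intros chT continuous_on_compose2[OF cAt]) (use y in \<open>auto simp: U_def L_def\<close>)
    then show "(\<lambda>s. Ax (y - s) * h s) integrable_on cbox 0 t"
      by (simp add: integrable_continuous_interval)
  next
    have "continuous_on (U \<times> {0..t}) (\<lambda>z. ax (fst z - snd z) * h (snd z))"
      by (intro continuous_intros continuous_on_compose2[OF cat] continuous_on_compose2[OF chT])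
        auto
    then show "continuous_on (U \<times> cbox 0 t) (\<lambda>(y, s). ax (y - s) * h s)"
      by (simp add: split_beta)
  qed
  have t01: "t \<in> U" "0 \<in> U" using t unfolding U_def by auto
  have HI: "(Phi has_integral (H t - H 0)) {0..t}"
  proof (rule fundamental_theorem_of_calculus[OF t])
    fix x assume x: "x \<in> {0..t}"
    then have "x \<in> U" unfolding U_def by auto
    from dH[OF this] have "(H has_real_derivative Phi x) (at x within {0..t})"
      by (rule DERIV_subset) (auto simp: U_def)
    then show "(H has_vector_derivative Phi x) (at x within {0..t})"
      by (simp add: has_real_derivative_iff_has_vector_derivative)
  qed
  have H0: "H 0 = 0"
  proof -
    have "H 0 = integral {0..t} (\<lambda>s. 0::real)"
      unfolding H_def box_real(2) by (rule integral_cong) (auto simp: At0)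
    then show ?thesis by simp
  qed
  have Ht: "H t = integral {0..t} (\<lambda>s. integral {0..t-s} a * h s)"
    unfolding H_def box_real(2) by (rule integral_cong) (auto simp: Atpos)
  have PhiE: "Phi x = integral {0..x} (\<lambda>s. a (x - s) * h s)" if x: "x \<in> {0..t}" for x
  proof -
    have int: "(\<lambda>s. ax (x - s) * h s) integrable_on {0..t}"
      by (intro integrable_continuous_interval continuous_intros chT continuous_on_compose2[OF cat]) auto
    have "integral {0..x} (\<lambda>s. ax (x - s) * h s) + integral {x..t} (\<lambda>s. ax (x - s) * h s)
          = integral {0..t} (\<lambda>s. ax (x - s) * h s)"
      by (rule Henstock_Kurzweil_Integration.integral_combine) (use x int in auto)
    moreover have "integral {x..t} (\<lambda>s. ax (x - s) * h s) = integral {x..t} (\<lambda>s. 0::real)"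
      by (rule integral_cong) (auto simp: at0)
    moreover have "integral {0..x} (\<lambda>s. ax (x - s) * h s) = integral {0..x} (\<lambda>s. a (x - s) * h s)"
      by (rule integral_cong) (auto simp: atpos)
    ultimately show ?thesis unfolding Phi_def box_real(2) by simp
  qed
  have HI': "(Phi has_integral integral {0..t} (\<lambda>s. integral {0..t-s} a * h s)) {0..t}"
    using HI unfolding H0 Ht by simp
  show ?thesis
    by (rule has_integral_eq[OF _ HI']) (rule PhiE)
qed



lemma gg_cont:
  assumes e: "e \<ge> 1"
  shows "continuous_on {0..} (gg c d e)"
proof -
  have cR: "continuous_on {0..R} (gg c d e)" if "R \<ge> 0" for R
    using conv_gg(2)[OF e order.refl that, of c d] by simp
  show ?thesis
    unfolding continuous_on_eq_continuous_within
  proof (intro ballI)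
    fix x :: real assume x: "x \<in> {0..}"
    have "continuous (at x within {0..x+1}) (gg c d e)"
      using cR[of "x+1"] x by (simp add: continuous_on_eq_continuous_within)
    moreover have "at x within {0..x+1} = at x within {0..}"
      by (rule at_within_nhd[where S="{..<x+1}"]) auto
    ultimately show "continuous (at x within {0..}) (gg c d e)" by simp
  qed
qed

lemma gg_0:
  assumes mu: "\<mu> > 0" and e: "e = \<mu> + 1"
  shows "gg c d e 0 = 1"
  using gg_eq[OF mu e order.refl, of c d] by simp



lemma R_scalar:
  fixes \<alpha> \<beta> \<mu> \<rho> t :: real
  assumes mu: "\<mu> > 0" and t: "t \<ge> 0"
  defines "f \<equiv> \<lambda>u. exp (- \<beta> * u) * gg (\<rho> + \<beta>) (\<alpha> * \<rho>) (\<mu> + 1) u"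
  shows "((\<lambda>s. (1 + kernel_int \<alpha> \<beta> \<mu> (t - s)) * (\<rho> * f s)) has_integral (f t - 1)) {0..t}"
proof -
  define c where "c = \<rho> + \<beta>"
  define d where "d = \<alpha> * \<rho>"
  define e where "e = \<mu> + 1"
  define g where "g = gg c d e"
  define E where "E u = exp (- \<beta> * u)" for u
  have fE: "f u = E u * g u" for u unfolding f_def E_def g_def c_def d_def e_def by simp
  have e1: "e \<ge> 1" using mu unfolding e_def by simp
  have cg: "continuous_on {0..} g" unfolding g_def by (rule gg_cont[OF e1])
  have cgt: "continuous_on {0..u} g" for u by (rule continuous_on_subset[OF cg]) auto
  have cE: "continuous_on S E" for S unfolding E_def by (intro continuous_intros)
  have cf: "continuous_on {0..} f" unfolding fE[abs_def] by (intro continuous_intros cE cg)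
  have cft: "continuous_on {0..u} f" for u by (rule continuous_on_subset[OF cf]) auto
  define a where "a u = E u * ph \<mu> u" for u
  have ca: "continuous_on {0..} a" unfolding a_def using mu by (intro continuous_intros cE continuous_on_ph) auto
  have a0: "a 0 = 0" unfolding a_def using mu by (simp add: ph_at_0)
  define A where "A r = integral {0..r} a" for r
  have Kd: "kernel_int \<alpha> \<beta> \<mu> r = \<alpha> * (a r + \<beta> * A r)" if "r \<ge> 0" for r
    using kernel_int_eq[OF mu that, of \<alpha> \<beta>] unfolding a_def A_def E_def .
  define Mg where "Mg u = integral {0..u} (\<lambda>s. ph \<mu> (u - s) * g s)" for u
  have MgI: "((\<lambda>s. ph \<mu> (u - s) * g s) has_integral Mg u) {0..u}" if "u \<ge> 0" for u
    using conv_gg(1)[OF e1 _ that, of \<mu> c d] mu unfolding Mg_def g_def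
    by (auto simp: integral_unique)
  have P2: "((\<lambda>s. a (u - s) * f s) has_integral E u * Mg u) {0..u}" if "u \<ge> 0" for u
  proof -
    have "((\<lambda>s. E u * (ph \<mu> (u - s) * g s)) has_integral E u * Mg u) {0..u}"
      by (intro has_integral_mult_right MgI that)
    moreover have "E u * (ph \<mu> (u - s) * g s) = a (u - s) * f s" for s
    proof -
      have "E u = E (u - s) * E s" unfolding E_def by (simp add: exp_add[symmetric] algebra_simps)
      then show ?thesis unfolding a_def fE by (simp add: mult_ac)
    qed
    ultimately show ?thesis by simp
  qed
  define Jg where "Jg u = integral {0..u} g" for u
  define W where "W u = E u * Jg u" for u
  have Gu: "g u = 1 + c * Jg u + d * Mg u" if "u \<ge> 0" for u
    using gg_eq[OF mu e_def that, of c d] unfolding g_def Jg_def Mg_def by simp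
  have Gd: "d * (E u * Mg u) = f u - E u - c * W u" if "u \<ge> 0" for u
    unfolding fE W_def Gu[OF that] by (simp add: algebra_simps)
  have ig: "g integrable_on {0..u}" for u by (rule integrable_continuous_interval[OF cgt])
  have cJ: "continuous_on {0..t} Jg" unfolding Jg_def by (rule indefinite_integral_continuous_1[OF ig])
  have cW: "continuous_on {0..t} W" unfolding W_def by (intro continuous_intros cE cJ)
  have FTC1: "((\<lambda>u. f u - \<beta> * W u) has_integral (W t - W 0)) {0..t}"
  proof (rule fundamental_theorem_of_calculus[OF t])
    fix x assume x: "x \<in> {0..t}"
    have dJ: "(Jg has_real_derivative g x) (at x within {0..t})"
      unfolding Jg_def has_real_derivative_iff_has_vector_derivative
      by (rule integral_has_vector_derivative[OF cgt x])
    have dE: "(E has_real_derivative (- \<beta> * E x)) (at x within {0..t})"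
      unfolding E_def by (auto intro!: derivative_eq_intros)
    have "(W has_real_derivative (E x * g x + (- \<beta> * E x) * Jg x)) (at x within {0..t})"
      unfolding W_def by (rule DERIV_mult'[OF dE dJ])
    then show "(W has_vector_derivative f x - \<beta> * W x) (at x within {0..t})"
      unfolding has_real_derivative_iff_has_vector_derivative fE W_def by (simp add: algebra_simps)
  qed
  have W0: "W 0 = 0" unfolding W_def Jg_def by simp
  have FTC2: "((\<lambda>u. - \<beta> * E u) has_integral (E t - E 0)) {0..t}"
  proof (rule fundamental_theorem_of_calculus[OF t])
    fix x assume x: "x \<in> {0..t}"
    have "(E has_real_derivative (- \<beta> * E x)) (at x within {0..t})"
      unfolding E_def by (auto intro!: derivative_eq_intros)
    then show "(E has_vector_derivative - \<beta> * E x) (at x within {0..t})"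
      by (simp add: has_real_derivative_iff_has_vector_derivative)
  qed
  have E0: "E 0 = 1" unfolding E_def by simp
  define IF where "IF = integral {0..t} f"
  define IW where "IW = integral {0..t} W"
  define IE where "IE = integral {0..t} E"
  have HF: "(f has_integral IF) {0..t}" unfolding IF_def by (intro integrable_integral integrable_continuous_interval cft)
  have HW: "(W has_integral IW) {0..t}" unfolding IW_def by (intro integrable_integral integrable_continuous_interval cW)
  have HE: "(E has_integral IE) {0..t}" unfolding IE_def by (intro integrable_integral integrable_continuous_interval cE)
  have F1: "IF - \<beta> * IW = W t"
  proof -
    have "((\<lambda>u. f u - \<beta> * W u) has_integral (IF - \<beta> * IW)) {0..t}"
      by (intro has_integral_diff HF has_integral_mult_right HW)
    then show ?thesis using FTC1 W0 by (simp add: has_integral_unique)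
  qed
  have F2: "- \<beta> * IE = E t - 1"
  proof -
    have "((\<lambda>u. - \<beta> * E u) has_integral (- \<beta> * IE)) {0..t}"
      by (intro has_integral_mult_right HE)
    then show ?thesis using FTC2 E0 by (simp add: has_integral_unique)
  qed
  define Q where "Q = integral {0..t} (\<lambda>s. A (t - s) * f s)"
  have P3: "((\<lambda>x. E x * Mg x) has_integral Q) {0..t}"
  proof -
    have "((\<lambda>x. integral {0..x} (\<lambda>s. a (x - s) * f s)) has_integral Q) {0..t}"
      unfolding Q_def A_def by (rule conv_assoc[OF ca a0 cf t])
    moreover have "integral {0..x} (\<lambda>s. a (x - s) * f s) = E x * Mg x" if "x \<in> {0..t}" for x
      using P2[of x] that by (simp add: integral_unique)
    ultimately show ?thesis by (rule has_integral_eq[rotated]) simp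
  qed
  have F3: "d * Q = IF - IE - c * IW"
  proof -
    have "((\<lambda>x. d * (E x * Mg x)) has_integral d * Q) {0..t}" by (intro has_integral_mult_right P3)
    moreover have "((\<lambda>x. d * (E x * Mg x)) has_integral IF - IE - c * IW) {0..t}"
    proof -
      have "((\<lambda>x. f x - E x - c * W x) has_integral IF - IE - c * IW) {0..t}"
        by (intro has_integral_diff HF HE has_integral_mult_right HW)
      then show ?thesis by (rule has_integral_eq[rotated]) (simp add: Gd)
    qed
    ultimately show ?thesis by (rule has_integral_unique)
  qed
  have ia: "a integrable_on {0..t}"
    by (rule integrable_continuous_interval) (rule continuous_on_subset[OF ca], auto)
  have cA: "continuous_on {0..t} A" unfolding A_def by (rule indefinite_integral_continuous_1[OF ia])
  have cAts: "continuous_on {0..t} (\<lambda>s. A (t - s))"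
    by (rule continuous_on_compose2[OF cA]) (auto intro!: continuous_intros)
  have H3: "((\<lambda>s. A (t - s) * f s) has_integral Q) {0..t}"
    unfolding Q_def by (intro integrable_integral integrable_continuous_interval continuous_intros cAts cft)
  have Hall: "((\<lambda>s. \<rho> * f s + d * (a (t - s) * f s) + (d * \<beta>) * (A (t - s) * f s)) has_integral
               (\<rho> * IF + d * (E t * Mg t) + (d * \<beta>) * Q)) {0..t}"
    by (intro has_integral_add has_integral_mult_right HF P2 t H3)
  have val: "\<rho> * IF + d * (E t * Mg t) + (d * \<beta>) * Q = f t - 1"
  proof -
    have "(d * \<beta>) * Q = \<beta> * (d * Q)" by simp
    also have "\<dots> = \<beta> * (IF - IE - c * IW)" by (simp add: F3)
    finally have a1: "(d * \<beta>) * Q = \<beta> * IF - \<beta> * IE - c * (\<beta> * IW)" by (simp add: algebra_simps)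
    have a2: "d * (E t * Mg t) = f t - E t - c * W t" by (rule Gd[OF t])
    have "\<rho> * IF + d * (E t * Mg t) + (d * \<beta>) * Q
        = (\<rho> + \<beta>) * IF - c * (W t + \<beta> * IW) + f t - E t + (- \<beta> * IE)"
      unfolding a1 a2 by (simp add: algebra_simps)
    also have "\<dots> = f t - 1"
      unfolding F2 using F1 unfolding c_def by (simp add: algebra_simps)
    finally show ?thesis .
  qed
  show ?thesis
  proof (rule has_integral_eq[OF _ Hall[unfolded val]])
    fix s assume s: "s \<in> {0..t}"
    then have "t - s \<ge> 0" by simp
    then show "\<rho> * f s + d * (a (t - s) * f s) + d * \<beta> * (A (t - s) * f s)
             = (1 + kernel_int \<alpha> \<beta> \<mu> (t - s)) * (\<rho> * f s)"
      unfolding Kd[OF \<open>t - s \<ge> 0\<close>] d_def by (simp add: algebra_simps)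
  qed
qed



lemma volterra_zero:
  fixes Tm :: real and w :: "real \<Rightarrow> 'a::banach" and k :: "real \<Rightarrow> real"
  assumes cw: "continuous_on {0..Tm} w" and kb: "\<And>r. r \<in> {0..Tm} \<Longrightarrow> \<bar>k r\<bar> \<le> C"
    and eq: "\<And>t. t \<in> {0..Tm} \<Longrightarrow> ((\<lambda>s. k (t - s) *\<^sub>R w s) has_integral w t) {0..t}"
    and t: "t \<in> {0..Tm}"
  shows "w t = 0"
proof -
  obtain m where m: "m \<ge> 0" "\<And>x. x \<in> {0..Tm} \<Longrightarrow> norm (w x) \<le> m"
    using continuous_on_compact_bound[OF compact_Icc cw] by metis
  have C0: "C \<ge> 0" using kb[of 0] t by (auto intro: order_trans[OF abs_ge_zero])
  have ind: "\<forall>t\<in>{0..Tm}. norm (w t) \<le> m * C^n * ph (real n) t" for n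
  proof (induction n)
    case 0
    then show ?case using m by simp
  next
    case (Suc n)
    show ?case
    proof
      fix t assume t: "t \<in> {0..Tm}"
      have sub: "{0..t} \<subseteq> {0..Tm}" using t by auto
      have cwt: "continuous_on {0..t} w" using cw sub by (rule continuous_on_subset)
      have "w t = integral {0..t} (\<lambda>s. k (t - s) *\<^sub>R w s)" using eq[OF t] by (simp add: integral_unique)
      also have "norm \<dots> \<le> integral {0..t} (\<lambda>s. (m * C^(Suc n)) * (ph 0 (t - s) * ph (real n) s))"
      proof (rule integral_norm_bound_integral)
        show "(\<lambda>s. k (t - s) *\<^sub>R w s) integrable_on {0..t}" using eq[OF t] by blast
        show "(\<lambda>s. (m * C^(Suc n)) * (ph 0 (t - s) * ph (real n) s)) integrable_on {0..t}"
        proof -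
          have "((\<lambda>s. (m * C^(Suc n)) * (ph 0 (t - s) * ph (real n) s)) has_integral (m * C^(Suc n)) * ph (0 + real n + 1) t) {0..t}"
            by (intro has_integral_mult_right ph_conv) (use t in auto)
          then show ?thesis by blast
        qed
        fix s assume s: "s \<in> {0..t}"
        then have sT: "s \<in> {0..Tm}" "t - s \<in> {0..Tm}" using t by auto
        have "norm (k (t - s) *\<^sub>R w s) = \<bar>k (t - s)\<bar> * norm (w s)" by simp
        also have "\<dots> \<le> C * (m * C^n * ph (real n) s)"
          using kb[OF sT(2)] Suc.IH sT(1) by (intro mult_mono) auto
        finally show "norm (k (t - s) *\<^sub>R w s) \<le> (m * C^(Suc n)) * (ph 0 (t - s) * ph (real n) s)"
          by (simp add: mult_ac)
      qed
      also have "\<dots> = (m * C^(Suc n)) * ph (real (Suc n)) t"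
        using ph_conv[of 0 "real n" t] t by (simp add: integral_unique add_ac)
      finally show "norm (w t) \<le> m * C^(Suc n) * ph (real (Suc n)) t" .
    qed
  qed
  define l where "l = 2 * C + 1"
  have l: "l > 0" using C0 by (simp add: l_def)
  have bnd: "norm (w t) \<le> m * exp 2 * exp (l * t) * (C / l)^n" for n
  proof -
    have t0: "t \<ge> 0" using t by simp
    have "norm (w t) \<le> m * C^n * ph (real n) t" using ind t by blast
    also have "\<dots> \<le> m * C^n * (exp 2 * exp (l * t) / l powr real n)"
      using ph_bound[OF t0 _ l, of "real n"] m C0 by (intro mult_left_mono) auto
    also have "\<dots> = m * exp 2 * exp (l * t) * (C / l)^n"
      using l by (simp add: powr_realpow power_divide)
    finally show ?thesis .
  qed
  have lim: "(\<lambda>n. m * exp 2 * exp (l * t) * (C / l)^n) \<longlonglongrightarrow> 0"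
  proof -
    have "norm (C / l) < 1" using C0 l by (simp add: l_def)
    then have "(\<lambda>n. (C / l)^n) \<longlonglongrightarrow> 0" by (rule LIMSEQ_power_zero)
    then show ?thesis by (intro tendsto_mult_right_zero)
  qed
  have "norm (w t) \<le> 0" by (rule LIMSEQ_le_const[OF lim]) (use bnd in auto)
  then show ?thesis by simp
qed

lemma pochhammer_binom: "pochhammer (real k + 1) n / fact n = real ((k + n) choose n)"
proof -
  have "real ((k + n) choose n) = real (k + n) gchoose n" by (rule binomial_gbinomial)
  also have "\<dots> = pochhammer (real (k + n) - real n + 1) n / fact n" by (rule gbinomial_pochhammer')
  finally show ?thesis by simp
qed

lemma pow_pw:
  assumes t: "t \<ge> 0" and e: "e > 0"
  shows "t^k * (t powr e)^n = pw (real k + e * real n) t"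
proof (cases "t = 0")
  case True
  have pos: "real k + e * real n > 0" if "k \<noteq> 0 \<or> n \<noteq> 0"
  proof (cases "k = 0")
    case False
    then have "real k > 0" by simp
    moreover have "e * real n \<ge> 0" using e by simp
    ultimately show ?thesis by (rule add_pos_nonneg)
  next
    case True
    then have "n \<noteq> 0" using that by simp
    then have "e * real n > 0" using e by simp
    then show ?thesis by simp
  qed
  show ?thesis
  proof (cases "k = 0 \<and> n = 0")
    case True then show ?thesis by (simp add: pw_def)
  next
    case False
    then have "real k + e * real n \<noteq> 0" using pos by force
    moreover have "t^k * (t powr e)^n = 0" using False \<open>t = 0\<close> by auto
    ultimately show ?thesis using \<open>t = 0\<close> by (simp add: pw_def)
  qed
next
  case False
  then have t0: "t > 0" using t by simp
  have "t^k = t powr real k" using t0 by (simp add: powr_realpow)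
  moreover have "(t powr e)^n = t powr (e * real n)" using t0 by (simp add: powr_powr[symmetric] powr_realpow[symmetric] mult.commute)
  ultimately have "t^k * (t powr e)^n = t powr (real k + e * real n)" by (simp add: powr_add)
  then show ?thesis using t0 by (simp add: pw_pos)
qed

lemma mlf_term:
  assumes t: "t \<ge> 0" and e: "e > 0"
  shows "c^k * t^k * (pochhammer (real k + 1) n / (fact n * Gamma (e * real n + (real k + 1))) * (d * t powr e)^n)
         = T c d e k n t"
proof -
  have "c^k * t^k * (pochhammer (real k + 1) n / (fact n * Gamma (e * real n + (real k + 1))) * (d * t powr e)^n)
      = c^k * d^n * (pochhammer (real k + 1) n / fact n) * ((t^k * (t powr e)^n) / Gamma ((real k + e * real n) + 1))"
    by (simp add: power_mult_distrib field_simps add_ac)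
  also have "\<dots> = T c d e k n t"
    unfolding pochhammer_binom pow_pw[OF t e] T_def ph_def by simp
  finally show ?thesis .
qed

lemma mlf_Tin:
  assumes t: "t \<ge> 0" and mu: "\<mu> > 0"
  shows "c^k * t^k * prabhakar_ML (real k + 1) (\<mu> + 1) (real k + 1) (d * t powr (\<mu> + 1)) = Tin c d (\<mu> + 1) k t"
proof -
  define e where "e = \<mu> + 1"
  have e0: "e > 0" and e1: "e \<ge> 1" using mu by (auto simp: e_def)
  define tm where "tm n = pochhammer (real k + 1) n / (fact n * Gamma (e * real n + (real k + 1))) * (d * t powr e)^n" for n
  have PM: "prabhakar_ML (real k + 1) (\<mu> + 1) (real k + 1) (d * t powr (\<mu> + 1)) = (\<Sum>n. tm n)"
    unfolding prabhakar_ML_def tm_def e_def by simp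
  show ?thesis
  proof (cases "c^k * t^k = 0")
    case True
    then have ct: "c = 0 \<or> t = 0" by auto
    have k0: "k > 0" using True by (cases k) auto
    have "T c d e k n t = 0" for n
    proof (cases "c = 0")
      case True then show ?thesis using k0 by (simp add: T_def)
    next
      case False
      then have "t = 0" using ct by simp
      moreover have "real k + e * real n > 0" using k0 e0 by (simp add: add_pos_nonneg)
      ultimately show ?thesis by (simp add: T_def ph_at_0)
    qed
    then show ?thesis using True unfolding PM Tin_def e_def[symmetric] by simp
  next
    case False
    then have tk: "t^k \<noteq> 0" by simp
    have "tm n = T 1 d e k n t / t^k" for n
      using mlf_term[OF t e0, of 1 k n d] tk unfolding tm_def by (simp add: field_simps)
    then have tmE: "tm = (\<lambda>n. T 1 d e k n t / t^k)" by (rule ext)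
    have stm: "summable tm"
      unfolding tmE by (rule summable_divide[OF T_summable[OF e1 t]])
    have "c^k * t^k * (\<Sum>n. tm n) = (\<Sum>n. c^k * t^k * tm n)" using stm by (rule suminf_mult[symmetric])
    also have "\<dots> = Tin c d e k t" unfolding Tin_def tm_def using mlf_term[OF t e0] by simp
    finally show ?thesis unfolding PM e_def .
  qed
qed



declare scaleR_blinfun.rep_eq[simp]

theorem proposition5p1:
  fixes \<alpha> \<beta> \<mu> \<rho> :: real
  assumes "\<alpha> \<noteq> 0" and "0 < \<mu>" and "\<mu> \<le> 1" and "\<beta> \<ge> 0"
    and "\<alpha> > 0 \<or> (\<alpha> < 0 \<and> \<alpha> + \<beta> powr \<mu> \<ge> \<bar>\<alpha>\<bar>)"
    and conv: "\<forall>t\<ge>0. summable (\<lambda>k. (\<rho> + \<beta>) ^ k * t ^ k *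
                 prabhakar_ML (real k + 1) (\<mu> + 1) (real k + 1) (\<alpha> * \<rho> * t powr (\<mu> + 1)))"
  defines "s \<equiv> (\<lambda>t. exp (- \<beta> * t) * (\<Sum>k. (\<rho> + \<beta>) ^ k * t ^ k *
                 prabhakar_ML (real k + 1) (\<mu> + 1) (real k + 1) (\<alpha> * \<rho> * t powr (\<mu> + 1))))"
  shows "resolvent_family \<alpha> \<beta> \<mu> (UNIV :: 'a::banach set) (\<lambda>x. \<rho> *\<^sub>R x)
           (\<lambda>t. s t *\<^sub>R id_blinfun)
       \<and> exp_bounded (\<lambda>t. s t *\<^sub>R (id_blinfun :: 'a \<Rightarrow>\<^sub>L 'a))
       \<and> (\<forall>S. resolvent_family \<alpha> \<beta> \<mu> (UNIV :: 'a set) (\<lambda>x. \<rho> *\<^sub>R x) S \<and> exp_bounded S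
              \<longrightarrow> (\<forall>t\<ge>0. S t = s t *\<^sub>R id_blinfun))"
proof -
  have mu: "\<mu> > 0" using assms(2) .
  define c where "c = \<rho> + \<beta>"
  define d where "d = \<alpha> * \<rho>"
  define e where "e = \<mu> + 1"
  have e1: "e \<ge> 1" using mu by (simp add: e_def)
  define g where "g = gg c d e"
  define f where "f u = exp (- \<beta> * u) * g u" for u
  define K where "K = kernel_int \<alpha> \<beta> \<mu>"
  have sf: "s u = f u" if u: "u \<ge> 0" for u
  proof -
    have "(\<Sum>k. (\<rho> + \<beta>) ^ k * u ^ k * prabhakar_ML (real k + 1) (\<mu> + 1) (real k + 1) (\<alpha> * \<rho> * u powr (\<mu> + 1)))
          = g u"
      unfolding g_def gg_def c_def d_def e_def using mlf_Tin[OF u mu] by simp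
    then show ?thesis unfolding s_def f_def by simp
  qed
  have cf: "continuous_on {0..} f"
    unfolding f_def[abs_def] g_def by (intro continuous_intros gg_cont e1)
  have cs: "continuous_on {0..} s"
    by (rule continuous_on_eq[OF cf]) (simp add: sf)
  have s0: "s 0 = 1" using sf[of 0] gg_0[OF mu e_def] by (simp add: f_def g_def)
  have Rs: "((\<lambda>u. (1 + K (t - u)) * (\<rho> * f u)) has_integral (f t - 1)) {0..t}" if "t \<ge> 0" for t
    using R_scalar[OF mu that, of \<alpha> \<beta> \<rho>] unfolding f_def g_def c_def d_def e_def K_def .
  have Rv: "((\<lambda>u. (1 + K (t - u)) *\<^sub>R \<rho> *\<^sub>R (s u *\<^sub>R (x::'a))) has_integral (s t *\<^sub>R x - x)) {0..t}"
    if t: "t \<ge> 0" for t x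
  proof -
    have "((\<lambda>u. ((1 + K (t - u)) * (\<rho> * f u)) *\<^sub>R x) has_integral (f t - 1) *\<^sub>R x) {0..t}"
      by (rule has_integral_scaleR_left[OF Rs[OF t]])
    moreover have "(f t - 1) *\<^sub>R x = s t *\<^sub>R x - x" using sf t by (simp add: algebra_simps)
    ultimately have H2: "((\<lambda>u. ((1 + K (t - u)) * (\<rho> * f u)) *\<^sub>R x) has_integral s t *\<^sub>R x - x) {0..t}"
      by simp
    show ?thesis
      by (rule has_integral_eq[OF _ H2]) (auto simp: sf)
  qed
  have P1: "resolvent_family \<alpha> \<beta> \<mu> (UNIV :: 'a set) (\<lambda>x. \<rho> *\<^sub>R x) (\<lambda>t. s t *\<^sub>R id_blinfun)"
    unfolding resolvent_family_def
  proof (intro conjI allI ballI impI)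
    fix x :: 'a
    have app: "(s t *\<^sub>R id_blinfun) x = s t *\<^sub>R x" for t by simp
    show "continuous_on {0..} (\<lambda>t. (s t *\<^sub>R id_blinfun) x)"
      unfolding app by (intro continuous_intros cs)
  next
    show "s 0 *\<^sub>R id_blinfun = (id_blinfun :: 'a \<Rightarrow>\<^sub>L 'a)" by (simp add: s0)
  next
    fix t :: real and x :: 'a
    show "(s t *\<^sub>R id_blinfun) x \<in> UNIV" by simp
    show "\<rho> *\<^sub>R (s t *\<^sub>R id_blinfun) x = (s t *\<^sub>R id_blinfun) (\<rho> *\<^sub>R x)" by simp
  next
    fix t :: real and x :: 'a assume t: "t \<ge> 0"
    show "((\<lambda>u. (1 + kernel_int \<alpha> \<beta> \<mu> (t - u)) *\<^sub>R \<rho> *\<^sub>R (s u *\<^sub>R id_blinfun) x) has_integral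
            (s t *\<^sub>R id_blinfun) x - x) {0..t}"
      using Rv[OF t, of x] unfolding K_def by simp
  qed
  have P2: "exp_bounded (\<lambda>t. s t *\<^sub>R (id_blinfun :: 'a \<Rightarrow>\<^sub>L 'a))"
    unfolding exp_bounded_def
  proof (rule exI[of _ "4 * exp 2"], intro conjI exI[of _ "lam c d - \<beta>"] allI impI)
    show "0 < 4 * exp (2::real)" by simp
    fix t :: real assume t: "t \<ge> 0"
    have "norm (s t *\<^sub>R (id_blinfun :: 'a \<Rightarrow>\<^sub>L 'a)) = \<bar>s t\<bar> * norm (id_blinfun :: 'a \<Rightarrow>\<^sub>L 'a)" by simp
    also have "\<dots> \<le> \<bar>s t\<bar>" by (rule mult_left_le[OF norm_blinfun_id_le]) simp
    also have "\<bar>s t\<bar> = exp (- \<beta> * t) * \<bar>g t\<bar>" using sf[OF t] by (simp add: f_def abs_mult)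
    also have "\<dots> \<le> exp (- \<beta> * t) * (4 * exp 2 * exp (lam c d * t))"
      using gg_bound[OF e1 t, of c d] unfolding g_def by (intro mult_left_mono) auto
    also have "\<dots> = 4 * exp 2 * exp ((lam c d - \<beta>) * t)" by (simp add: algebra_simps exp_add[symmetric])
    finally show "norm (s t *\<^sub>R (id_blinfun :: 'a \<Rightarrow>\<^sub>L 'a)) \<le> 4 * exp 2 * exp ((lam c d - \<beta>) * t)" .
  qed
  have P3: "\<forall>S. resolvent_family \<alpha> \<beta> \<mu> (UNIV :: 'a set) (\<lambda>x. \<rho> *\<^sub>R x) S \<and> exp_bounded S
              \<longrightarrow> (\<forall>t\<ge>0. S t = s t *\<^sub>R id_blinfun)"
  proof (intro allI impI)
    fix S :: "real \<Rightarrow> 'a \<Rightarrow>\<^sub>L 'a" and t :: real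
    assume RS: "resolvent_family \<alpha> \<beta> \<mu> (UNIV :: 'a set) (\<lambda>x. \<rho> *\<^sub>R x) S \<and> exp_bounded S"
      and t: "t \<ge> 0"
    have Sc: "continuous_on {0..} (\<lambda>u. S u x)" for x using RS unfolding resolvent_family_def by blast
    have Si: "((\<lambda>u. (1 + K (\<tau> - u)) *\<^sub>R \<rho> *\<^sub>R S u x) has_integral (S \<tau> x - x)) {0..\<tau>}"
      if "\<tau> \<ge> 0" for \<tau> x
      using RS that unfolding resolvent_family_def K_def by blast
    define a where "a u = exp (- \<beta> * u) * ph \<mu> u" for u
    have ca: "continuous_on {0..} a" unfolding a_def using mu
      by (intro continuous_intros continuous_on_ph) auto
    have ia: "a integrable_on {0..t}"
      by (rule integrable_continuous_interval) (rule continuous_on_subset[OF ca], auto)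
    have cA: "continuous_on {0..t} (\<lambda>r. integral {0..r} a)" by (rule indefinite_integral_continuous_1[OF ia])
    have cK: "continuous_on {0..t} (\<lambda>r. (1 + K r) * \<rho>)"
    proof (rule continuous_on_eq)
      show "continuous_on {0..t} (\<lambda>r. (1 + \<alpha> * (a r + \<beta> * integral {0..r} a)) * \<rho>)"
        by (intro continuous_intros cA continuous_on_subset[OF ca]) auto
      fix r assume "r \<in> {0..t}"
      then show "(1 + \<alpha> * (a r + \<beta> * integral {0..r} a)) * \<rho> = (1 + K r) * \<rho>"
        unfolding K_def a_def using kernel_int_eq[OF mu, of r \<alpha> \<beta>] by simp
    qed
    obtain C where C: "\<And>r. r \<in> {0..t} \<Longrightarrow> norm ((1 + K r) * \<rho>) \<le> C"
      using continuous_on_compact_bound[OF compact_Icc cK] by metis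
    show "S t = s t *\<^sub>R id_blinfun"
    proof (rule blinfun_eqI)
      fix x :: 'a
      define w where "w u = S u x - s u *\<^sub>R x" for u
      have cw: "continuous_on {0..t} w" unfolding w_def
        by (intro continuous_intros continuous_on_subset[OF Sc] continuous_on_subset[OF cs]) auto
      have weq: "((\<lambda>u. ((1 + K (\<tau> - u)) * \<rho>) *\<^sub>R w u) has_integral w \<tau>) {0..\<tau>}"
        if "\<tau> \<in> {0..t}" for \<tau>
      proof -
        have tau: "\<tau> \<ge> 0" using that by simp
        have "((\<lambda>u. (1 + K (\<tau> - u)) *\<^sub>R \<rho> *\<^sub>R S u x - (1 + K (\<tau> - u)) *\<^sub>R \<rho> *\<^sub>R (s u *\<^sub>R x))
                has_integral ((S \<tau> x - x) - (s \<tau> *\<^sub>R x - x))) {0..\<tau>}"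
          by (rule has_integral_diff[OF Si[OF tau] Rv[OF tau]])
        then show ?thesis unfolding w_def by (simp add: scaleR_diff_right mult.assoc)
      qed
      have "w t = 0"
        by (rule volterra_zero[OF cw _ weq, of C]) (use C t in auto)
      then show "S t x = (s t *\<^sub>R id_blinfun) x" unfolding w_def by simp
    qed
  qed
  show ?thesis using P1 P2 P3 by blast
qed


end
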